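(* Let $G$ be a multiplicative monoid with identity, let $N$ be a $G$-graded near-ring, and let $P$ be a graded weakly prime ideal of $N$. If $I$ and $J$ are graded ideals of $N$ with $IJ=\{0\}$, $I\not\subseteq P$ and $J\not\subseteq P$, then $IP = PJ$.
   Context: A near-ring $(N,+,\cdot)$ is a set with two binary operations such that $(N,+)$ is a group (not necessarily abelian), $(N,\cdot)$ is a semigroup, and $(a+b)y = ay+by$ for all $a,b,y\in N$. For a multiplicative monoid $G$ with identity, $N$ is a $G$-graded near-ring if there is a family $\{N_\sigma\}_{\sigma\in G}$ of additive normal subgroups of $N$ with $N=\bigoplus_{\sigma\in G}N_\sigma$ and $N_\sigma N_\tau\subseteq N_{\sigma\tau}$. An ideal $P$ of $N$ is graded if $P=\bigoplus_{\sigma}(P\cap N_\sigma)$. For ideals $I,J$, $IJ$ denotes their product. A graded ideal $P$ is graded weakly prime if for all graded ideals $I,J$ of $N$ with $\{0\}\neq IJ\subseteq P$, either $I\subseteq P$ or $J\subseteq P$. *)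

theory Defs
  imports Main
begin

text \<open>A (right) near-ring: (N,+) a not necessarily abelian group, (N,*) a semigroup,
  and right distributivity (a+b)y = ay+by. The carrier is the whole type.\<close>
class near_ring = group_add + semigroup_mult +
  assumes nr_distrib_right: "(a + b) * c = a * c + b * c"

definition add_normal_subgroup :: "'a::group_add set \<Rightarrow> bool" where
  "add_normal_subgroup H \<longleftrightarrow> 0 \<in> H \<and> (\<forall>x\<in>H. \<forall>y\<in>H. x + y \<in> H) \<and> (\<forall>x\<in>H. - x \<in> H)
     \<and> (\<forall>x. \<forall>h\<in>H. x + h - x \<in> H)"

definition nr_ideal :: "'a::near_ring set \<Rightarrow> bool" where
  "nr_ideal I \<longleftrightarrow> add_normal_subgroup I \<and> (\<forall>i\<in>I. \<forall>n. i * n \<in> I)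
     \<and> (\<forall>n m. \<forall>i\<in>I. n * (m + i) - n * m \<in> I)"

definition ideal_prod :: "'a::near_ring set \<Rightarrow> 'a set \<Rightarrow> 'a set" where
  "ideal_prod I J = {i * j | i j. i \<in> I \<and> j \<in> J}"

text \<open>Internal direct sum decomposition N = \<Oplus>_\<sigma> N_\<sigma> (with the N_\<sigma> normal subgroups),
  and N_\<sigma> N_\<tau> \<subseteq> N_{\<sigma>\<tau>}.\<close>
definition graded_near_ring :: "('g::monoid_mult \<Rightarrow> 'a::near_ring set) \<Rightarrow> bool" where
  "graded_near_ring Ns \<longleftrightarrow>
     (\<forall>\<sigma>. add_normal_subgroup (Ns \<sigma>))
   \<and> (\<forall>x. \<exists>\<sigma>s f. distinct \<sigma>s \<and> (\<forall>\<sigma>\<in>set \<sigma>s. f \<sigma> \<in> Ns \<sigma>) \<and> x = sum_list (map f \<sigma>s))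
   \<and> (\<forall>\<sigma>s f. distinct \<sigma>s \<and> (\<forall>\<sigma>\<in>set \<sigma>s. f \<sigma> \<in> Ns \<sigma>) \<and> sum_list (map f \<sigma>s) = 0
          \<longrightarrow> (\<forall>\<sigma>\<in>set \<sigma>s. f \<sigma> = 0))
   \<and> (\<forall>\<sigma> \<tau>. \<forall>a\<in>Ns \<sigma>. \<forall>b\<in>Ns \<tau>. a * b \<in> Ns (\<sigma> * \<tau>))"

definition graded_ideal :: "('g::monoid_mult \<Rightarrow> 'a::near_ring set) \<Rightarrow> 'a set \<Rightarrow> bool" where
  "graded_ideal Ns P \<longleftrightarrow> nr_ideal P \<and>
     (\<forall>x\<in>P. \<exists>\<sigma>s f. distinct \<sigma>s \<and> (\<forall>\<sigma>\<in>set \<sigma>s. f \<sigma> \<in> P \<inter> Ns \<sigma>) \<and> x = sum_list (map f \<sigma>s))"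

definition graded_weakly_prime :: "('g::monoid_mult \<Rightarrow> 'a::near_ring set) \<Rightarrow> 'a set \<Rightarrow> bool" where
  "graded_weakly_prime Ns P \<longleftrightarrow> graded_ideal Ns P \<and>
     (\<forall>I J. graded_ideal Ns I \<and> graded_ideal Ns J \<and> ideal_prod I J \<noteq> {0} \<and> ideal_prod I J \<subseteq> P
        \<longrightarrow> I \<subseteq> P \<or> J \<subseteq> P)"

end

theory Submission
  imports Defs
begin

definition dec :: "('g::monoid_mult \<Rightarrow> 'a::near_ring set) \<Rightarrow> 'a set \<Rightarrow> 'a \<Rightarrow> bool" where
  "dec Ns S x \<longleftrightarrow> (\<exists>\<sigma>s f. distinct \<sigma>s \<and> (\<forall>\<sigma>\<in>set \<sigma>s. f \<sigma> \<in> S \<inter> Ns \<sigma>) \<and> x = sum_list (map f \<sigma>s))"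

lemma gz:
  fixes Ns :: "'g::monoid_mult \<Rightarrow> 'a::near_ring set"
  assumes gr: "graded_near_ring Ns" and a: "a \<in> Ns \<sigma>" "a \<in> Ns \<tau>" and ne: "\<sigma> \<noteq> \<tau>"
  shows "a = 0"
proof -
  define f where "f = (\<lambda>k. if k = \<sigma> then a else - a)"
  have u: "\<forall>\<sigma>s f. distinct \<sigma>s \<and> (\<forall>\<sigma>\<in>set \<sigma>s. f \<sigma> \<in> Ns \<sigma>) \<and> sum_list (map f \<sigma>s) = 0
          \<longrightarrow> (\<forall>\<sigma>\<in>set \<sigma>s. f \<sigma> = 0)" using gr unfolding graded_near_ring_def by blast
  have "- a \<in> Ns \<tau>" using gr a unfolding graded_near_ring_def add_normal_subgroup_def by blast
  then have "\<forall>k\<in>set [\<sigma>,\<tau>]. f k \<in> Ns k" using a ne by (auto simp: f_def)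
  moreover have "distinct [\<sigma>,\<tau>]" using ne by simp
  moreover have "sum_list (map f [\<sigma>,\<tau>]) = 0" using ne by (simp add: f_def)
  ultimately have "f \<sigma> = 0" using u by (metis list.set_intros(1))
  then show ?thesis by (simp add: f_def)
qed

lemma comm:
  fixes Ns :: "'g::monoid_mult \<Rightarrow> 'a::near_ring set"
  assumes gr: "graded_near_ring Ns" and a: "a \<in> Ns \<sigma>" and b: "b \<in> Ns \<tau>" and ne: "\<sigma> \<noteq> \<tau>"
  shows "a + b = b + a"
proof -
  have ns: "add_normal_subgroup (Ns k)" for k using gr unfolding graded_near_ring_def by blast
  have "a + b - a \<in> Ns \<tau>" using ns[of \<tau>] b unfolding add_normal_subgroup_def by blast
  moreover have "- b \<in> Ns \<tau>" using ns[of \<tau>] b unfolding add_normal_subgroup_def by blast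
  ultimately have c1: "a + b - a + - b \<in> Ns \<tau>" using ns[of \<tau>] unfolding add_normal_subgroup_def by blast
  have "- a \<in> Ns \<sigma>" using ns[of \<sigma>] a unfolding add_normal_subgroup_def by blast
  then have "b + - a - b \<in> Ns \<sigma>" using ns[of \<sigma>] unfolding add_normal_subgroup_def by blast
  then have c2: "a + (b + - a - b) \<in> Ns \<sigma>" using ns[of \<sigma>] a unfolding add_normal_subgroup_def by blast
  have "a + b - a + - b = a + (b + - a - b)" by (simp only: diff_conv_add_uminus add.assoc)
  then have "a + b - a + - b = 0" using gz[OF gr _ c1 ne] c2 by simp
  then show ?thesis by (metis add_diff_cancel diff_add_cancel diff_conv_add_uminus eq_iff_diff_eq_0)
qed


lemma absorb:
  fixes Ns :: "'g::monoid_mult \<Rightarrow> 'a::near_ring set"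
  assumes gr: "graded_near_ring Ns" and a: "a \<in> S \<inter> Ns \<sigma>"
  shows "distinct \<sigma>s \<Longrightarrow> \<forall>\<tau>\<in>set \<sigma>s. f \<tau> \<in> S \<inter> Ns \<tau> \<Longrightarrow> \<forall>x\<in>S. \<forall>y\<in>S. x + y \<in> S \<Longrightarrow>
    \<exists>\<sigma>s' f'. distinct \<sigma>s' \<and> set \<sigma>s' \<subseteq> insert \<sigma> (set \<sigma>s) \<and> (\<forall>\<tau>\<in>set \<sigma>s'. f' \<tau> \<in> S \<inter> Ns \<tau>)
      \<and> a + sum_list (map f \<sigma>s) = sum_list (map f' \<sigma>s')"
proof (induction \<sigma>s)
  case Nil
  show ?case
    by (rule exI[of _ "[\<sigma>]"], rule exI[of _ "\<lambda>_. a"]) (use a in auto)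
next
  case (Cons \<tau> \<sigma>s)
  show ?case
  proof (cases "\<tau> = \<sigma>")
    case True
    let ?f = "f(\<sigma> := a + f \<tau>)"
    have m: "map ?f \<sigma>s = map f \<sigma>s" using Cons.prems(1) True by (auto intro!: map_cong)
    have "a + f \<tau> \<in> S \<inter> Ns \<sigma>" using Cons.prems a True gr
      unfolding graded_near_ring_def add_normal_subgroup_def by auto
    then have h1: "\<forall>k\<in>set (\<tau> # \<sigma>s). ?f k \<in> S \<inter> Ns k" using Cons.prems True by auto
    have h2: "a + sum_list (map f (\<tau> # \<sigma>s)) = sum_list (map ?f (\<tau> # \<sigma>s))"
    proof -
      have "sum_list (map ?f (\<tau> # \<sigma>s)) = ?f \<tau> + sum_list (map ?f \<sigma>s)" by simp
      also have "\<dots> = (a + f \<tau>) + sum_list (map f \<sigma>s)" using m True by (simp only: fun_upd_same)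
      finally show ?thesis by (simp add: add.assoc)
    qed
    have h3: "distinct (\<tau> # \<sigma>s) \<and> set (\<tau> # \<sigma>s) \<subseteq> insert \<sigma> (set (\<tau> # \<sigma>s))"
      using Cons.prems(1) by auto
    show ?thesis using h1 h2 h3 by blast
  next
    case False
    obtain \<sigma>s' f' where o: "distinct \<sigma>s'" "set \<sigma>s' \<subseteq> insert \<sigma> (set \<sigma>s)"
      "\<forall>\<tau>\<in>set \<sigma>s'. f' \<tau> \<in> S \<inter> Ns \<tau>" "a + sum_list (map f \<sigma>s) = sum_list (map f' \<sigma>s')"
      using Cons by auto
    have c: "a + f \<tau> = f \<tau> + a" using comm[OF gr _ _ False[symmetric]] a Cons.prems(2) by auto
    have nt: "\<tau> \<notin> set \<sigma>s'" using o(2) False Cons.prems(1) by auto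
    let ?f = "f'(\<tau> := f \<tau>)"
    have m: "map ?f \<sigma>s' = map f' \<sigma>s'" using nt by (auto intro!: map_cong)
    have "a + sum_list (map f (\<tau> # \<sigma>s)) = f \<tau> + (a + sum_list (map f \<sigma>s))"
      by (simp add: add.assoc[symmetric] c)
    also have "\<dots> = f \<tau> + sum_list (map f' \<sigma>s')" using o(4) by simp
    also have "\<dots> = ?f \<tau> + sum_list (map ?f \<sigma>s')" by (simp only: m fun_upd_same)
    also have "\<dots> = sum_list (map ?f (\<tau> # \<sigma>s'))" by simp
    finally have h2: "a + sum_list (map f (\<tau> # \<sigma>s)) = sum_list (map ?f (\<tau> # \<sigma>s'))" .
    have h1: "\<forall>k\<in>set (\<tau> # \<sigma>s'). ?f k \<in> S \<inter> Ns k" using o(3) nt Cons.prems(2) by auto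
    have h3: "distinct (\<tau> # \<sigma>s') \<and> set (\<tau> # \<sigma>s') \<subseteq> insert \<sigma> (set (\<tau> # \<sigma>s))"
      using o(1,2) nt by auto
    show ?thesis using h1 h2 h3 by blast
  qed
qed

lemma sumdec:
  fixes Ns :: "'g::monoid_mult \<Rightarrow> 'a::near_ring set"
  assumes gr: "graded_near_ring Ns" and S: "\<forall>x\<in>S. \<forall>y\<in>S. x + y \<in> S" and y: "dec Ns S y"
  shows "distinct \<sigma>s \<Longrightarrow> \<forall>\<tau>\<in>set \<sigma>s. f \<tau> \<in> S \<inter> Ns \<tau> \<Longrightarrow> dec Ns S (sum_list (map f \<sigma>s) + y)"
proof (induction \<sigma>s)
  case Nil
  then show ?case using y by simp
next
  case (Cons \<sigma> \<sigma>s)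
  then have "dec Ns S (sum_list (map f \<sigma>s) + y)" by auto
  then obtain \<sigma>s' f' where o: "distinct \<sigma>s'" "\<forall>\<tau>\<in>set \<sigma>s'. f' \<tau> \<in> S \<inter> Ns \<tau>"
    "sum_list (map f \<sigma>s) + y = sum_list (map f' \<sigma>s')" unfolding dec_def by blast
  have "f \<sigma> \<in> S \<inter> Ns \<sigma>" using Cons.prems by auto
  from absorb[OF gr this o(1,2) S] obtain \<sigma>s'' f'' where
    "distinct \<sigma>s''" "\<forall>\<tau>\<in>set \<sigma>s''. f'' \<tau> \<in> S \<inter> Ns \<tau>"
    "f \<sigma> + sum_list (map f' \<sigma>s') = sum_list (map f'' \<sigma>s'')" by blast
  then show ?case using o(3) unfolding dec_def
    by (intro exI[of _ \<sigma>s''] exI[of _ f'']) (auto simp: add.assoc)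
qed


lemma swap_in:
  fixes A B :: "'a::near_ring set"
  assumes nB: "add_normal_subgroup B" and b: "b \<in> B"
  shows "\<exists>b'\<in>B. b + a = a + b'"
proof -
  have "- a + b - - a \<in> B" using nB b unfolding add_normal_subgroup_def by blast
  moreover have "b + a = a + (- a + b - - a)" by (simp add: add.assoc)
  ultimately show ?thesis by blast
qed

lemma sum_ideal:
  fixes Ns :: "'g::monoid_mult \<Rightarrow> 'a::near_ring set"
  assumes gr: "graded_near_ring Ns" and A: "graded_ideal Ns A" and B: "graded_ideal Ns B"
  shows "graded_ideal Ns {a + b | a b. a \<in> A \<and> b \<in> B}"
proof -
  let ?S = "{a + b | a b. a \<in> A \<and> b \<in> B}"
  have iA: "nr_ideal A" and iB: "nr_ideal B" using A B unfolding graded_ideal_def by auto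
  have nA: "add_normal_subgroup A" and nB: "add_normal_subgroup B"
    using iA iB unfolding nr_ideal_def by auto
  have A0: "0 \<in> A" and Aadd: "\<And>x y. x \<in> A \<Longrightarrow> y \<in> A \<Longrightarrow> x + y \<in> A"
    and Aneg: "\<And>x. x \<in> A \<Longrightarrow> - x \<in> A" and Acj: "\<And>x h. h \<in> A \<Longrightarrow> x + h - x \<in> A"
    using nA unfolding add_normal_subgroup_def by auto
  have B0: "0 \<in> B" and Badd: "\<And>x y. x \<in> B \<Longrightarrow> y \<in> B \<Longrightarrow> x + y \<in> B"
    and Bneg: "\<And>x. x \<in> B \<Longrightarrow> - x \<in> B" and Bcj: "\<And>x h. h \<in> B \<Longrightarrow> x + h - x \<in> B"
    using nB unfolding add_normal_subgroup_def by auto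
  have memS: "\<And>a b. a \<in> A \<Longrightarrow> b \<in> B \<Longrightarrow> a + b \<in> ?S" by blast
  have AS: "A \<subseteq> ?S"
  proof
    fix a assume "a \<in> A" then show "a \<in> ?S" using memS[of a 0] B0 by simp
  qed
  have BS: "B \<subseteq> ?S"
  proof
    fix b assume "b \<in> B" then show "b \<in> ?S" using memS[of 0 b] A0 by simp
  qed
  have Sadd: "\<forall>x\<in>?S. \<forall>y\<in>?S. x + y \<in> ?S"
  proof (intro ballI)
    fix x y assume "x \<in> ?S" "y \<in> ?S"
    then obtain a b a' b' where ab: "a \<in> A" "b \<in> B" "a' \<in> A" "b' \<in> B" "x = a + b" "y = a' + b'" by blast
    obtain b'' where b'': "b'' \<in> B" "b + a' = a' + b''" using swap_in[OF nB ab(2)] by blast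
    have "x + y = (a + a') + (b'' + b')" using ab b'' by (simp add: add.assoc[symmetric]) (simp add: add.assoc)
    then show "x + y \<in> ?S" using Aadd Badd ab b'' memS by simp
  qed
  have "add_normal_subgroup ?S"
    unfolding add_normal_subgroup_def
  proof (intro conjI ballI allI)
    show "0 \<in> ?S" using A0 B0 memS[of 0 0] by simp
    show "\<And>x y. x \<in> ?S \<Longrightarrow> y \<in> ?S \<Longrightarrow> x + y \<in> ?S" using Sadd by blast
  next
    fix x assume "x \<in> ?S"
    then obtain a b where ab: "a \<in> A" "b \<in> B" "x = a + b" by blast
    have e: "- x = - b + - a" using ab by (simp add: minus_add)
    have m1: "- b \<in> ?S" using BS Bneg[OF ab(2)] by (rule subsetD)
    have m2: "- a \<in> ?S" using AS Aneg[OF ab(1)] by (rule subsetD)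
    show "- x \<in> ?S" unfolding e by (rule Sadd[rule_format, OF m1 m2])
  next
    fix x h assume "h \<in> ?S"
    then obtain a b where ab: "a \<in> A" "b \<in> B" "h = a + b" by blast
    have "x + h - x = (x + a - x) + (x + b - x)" using ab by (simp only: diff_conv_add_uminus add.assoc minus_add_cancel)
    then show "x + h - x \<in> ?S" using Acj Bcj ab memS by simp
  qed
  moreover have "\<forall>i\<in>?S. \<forall>n. i * n \<in> ?S"
  proof (intro ballI allI)
    fix i n assume "i \<in> ?S"
    then obtain a b where ab: "a \<in> A" "b \<in> B" "i = a + b" by blast
    have "i * n = a * n + b * n" using ab by (simp add: nr_distrib_right)
    moreover have "a * n \<in> A" "b * n \<in> B" using iA iB ab unfolding nr_ideal_def by auto
    ultimately show "i * n \<in> ?S" using memS by simp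
  qed
  moreover have "\<forall>n m. \<forall>i\<in>?S. n * (m + i) - n * m \<in> ?S"
  proof (intro ballI allI)
    fix n m i assume "i \<in> ?S"
    then obtain a b where ab: "a \<in> A" "b \<in> B" "i = a + b" by blast
    have b1: "n * ((m + a) + b) - n * (m + a) \<in> B" using iB ab unfolding nr_ideal_def by blast
    have a1: "n * (m + a) - n * m \<in> A" using iA ab unfolding nr_ideal_def by blast
    have e: "n * (m + i) - n * m = (n * ((m + a) + b) - n * (m + a)) + (n * (m + a) - n * m)"
      using ab by (simp only: diff_conv_add_uminus add.assoc minus_add_cancel)
    show "n * (m + i) - n * m \<in> ?S" unfolding e
      by (rule Sadd[rule_format, OF subsetD[OF BS b1] subsetD[OF AS a1]])
  qed
  ultimately have "nr_ideal ?S" unfolding nr_ideal_def by blast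
  moreover have "\<forall>x\<in>?S. dec Ns ?S x"
  proof
    fix x assume "x \<in> ?S"
    then obtain a b where ab: "a \<in> A" "b \<in> B" "x = a + b" by blast
    obtain \<sigma>s f where f: "distinct \<sigma>s" "\<forall>\<sigma>\<in>set \<sigma>s. f \<sigma> \<in> A \<inter> Ns \<sigma>" "a = sum_list (map f \<sigma>s)"
      using A ab unfolding graded_ideal_def by blast
    obtain \<tau>s g where g: "distinct \<tau>s" "\<forall>\<sigma>\<in>set \<tau>s. g \<sigma> \<in> B \<inter> Ns \<sigma>" "b = sum_list (map g \<tau>s)"
      using B ab unfolding graded_ideal_def by blast
    have "dec Ns ?S b" unfolding dec_def using g BS by blast
    moreover have "\<forall>\<sigma>\<in>set \<sigma>s. f \<sigma> \<in> ?S \<inter> Ns \<sigma>" using f AS by blast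
    ultimately show "dec Ns ?S x" using sumdec[OF gr Sadd _ f(1)] f(3) ab(3) by blast
  qed
  ultimately show ?thesis unfolding graded_ideal_def dec_def by blast
qed

theorem theorem2:
  fixes Ns :: "'g::monoid_mult \<Rightarrow> 'a::near_ring set"
    and P I J :: "'a set"
  assumes "graded_near_ring Ns"
    and "graded_weakly_prime Ns P"
    and "graded_ideal Ns I" and "graded_ideal Ns J"
    and "ideal_prod I J = {0}"
    and "\<not> I \<subseteq> P" and "\<not> J \<subseteq> P"
  shows "ideal_prod I P = ideal_prod P J"
proof -
  note gr = assms(1)
  have gP: "graded_ideal Ns P" and wp: "\<And>X Y. graded_ideal Ns X \<Longrightarrow> graded_ideal Ns Y \<Longrightarrow>
      ideal_prod X Y \<noteq> {0} \<Longrightarrow> ideal_prod X Y \<subseteq> P \<Longrightarrow> X \<subseteq> P \<or> Y \<subseteq> P"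
    using assms(2) unfolding graded_weakly_prime_def by blast+
  have iP: "nr_ideal P" and iI: "nr_ideal I" and iJ: "nr_ideal J"
    using gP assms(3,4) unfolding graded_ideal_def by auto
  have z: "\<And>x y. x \<in> I \<Longrightarrow> y \<in> J \<Longrightarrow> x * y = 0" using assms(5) unfolding ideal_prod_def by blast
  have I0: "0 \<in> I" and J0: "0 \<in> J" and P0: "0 \<in> P"
    using iI iJ iP unfolding nr_ideal_def add_normal_subgroup_def by auto
  let ?S = "{a + b | a b. a \<in> J \<and> b \<in> P}"
  let ?T = "{a + b | a b. a \<in> I \<and> b \<in> P}"
  have gS: "graded_ideal Ns ?S" by (rule sum_ideal[OF gr assms(4) gP])
  have gT: "graded_ideal Ns ?T" by (rule sum_ideal[OF gr assms(3) gP])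
  have JS: "J \<subseteq> ?S" using P0 by force
  have IT: "I \<subseteq> ?T" using P0 by force
  have "ideal_prod I ?S \<subseteq> P"
  proof
    fix x assume "x \<in> ideal_prod I ?S"
    then obtain i j p where h: "i \<in> I" "j \<in> J" "p \<in> P" "x = i * (j + p)"
      unfolding ideal_prod_def by blast
    have "i * (j + p) - i * j \<in> P" using iP h unfolding nr_ideal_def by blast
    then show "x \<in> P" using h z by simp
  qed
  then have S0: "ideal_prod I ?S = {0}" using wp[OF assms(3) gS] assms(6,7) JS by blast
  have "ideal_prod ?T J \<subseteq> P"
  proof
    fix x assume "x \<in> ideal_prod ?T J"
    then obtain i j p where h: "i \<in> I" "j \<in> J" "p \<in> P" "x = (i + p) * j"
      unfolding ideal_prod_def by blast
    have "p * j \<in> P" using iP h unfolding nr_ideal_def by blast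
    then show "x \<in> P" using h z by (simp add: nr_distrib_right)
  qed
  then have T0: "ideal_prod ?T J = {0}" using wp[OF gT assms(4)] assms(6,7) IT by blast
  have "ideal_prod I P \<subseteq> ideal_prod I ?S" unfolding ideal_prod_def using J0 by force
  moreover have "0 \<in> ideal_prod I P" unfolding ideal_prod_def using I0 P0 z[OF I0 J0] by force
  ultimately have 1: "ideal_prod I P = {0}" using S0 by blast
  have "ideal_prod P J \<subseteq> ideal_prod ?T J" unfolding ideal_prod_def using I0 by force
  moreover have "0 \<in> ideal_prod P J" unfolding ideal_prod_def using J0 P0 z[OF I0 J0] by force
  ultimately have 2: "ideal_prod P J = {0}" using T0 by blast
  show ?thesis using 1 2 by simp
qed

end
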